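(* Let $\widetilde{\mathsf T}(z)$ be the operator defined in the context, written in the normal form $\widetilde{\mathsf T}(z)=\sum_\alpha f_\alpha(z)\mathsf D^{(\alpha)}$. Then for every $k\in\{1,\dots,d\}$ and every smooth function $F$ of $(k_1,\dots,k_{n-1})$, setting $G(\bm y,\rho)=F(\bm k(\bm y,\rho))$, one has $$\sum_\alpha f_\alpha(y_k)\,(\mathsf D^{(\alpha)}F)(\bm k(\bm y,\rho))=-\frac{\partial^2}{\partial y_k^2}G(\bm y,\rho),$$ at all points with $\rho\ne0$, $y_k\notin\{z_1,\dots,z_{n-1}\}$; i.e. $\widetilde{\mathsf T}(y_k)=-\partial_{y_k}^2$.
   Context: $n\ge4$, $d=n-3$, $z_1,\dots,z_{n-1}\in\mathbb C$ distinct, $j_1,\dots,j_{n-1}\in\mathbb C$, $\delta_r=j_r(j_r+1)$. Change of variables: $k_r(\bm y,\rho)=\rho\,\kappa_r(\bm y)$, $\kappa_r(\bm y)=\frac{\prod_{k=1}^{d}(z_r-y_k)}{\prod_{s\ne r}(z_r-z_s)}$, $r=1,\dots,n-1$, with $\bm y=(y_1,\dots,y_d)$, $\rho\in\mathbb C^*$. Define operators in the variables $k_1,\dots,k_{n-1}$ depending on $z\in\mathbb C\setminus\{z_r\}$: $\mathsf c(z)=\sum_{r=1}^{n-1}\frac{k_r}{z-z_r}$, $\mathsf a(z)=-\sum_{r=1}^{n-1}\frac{k_r}{z-z_r}\partial_{k_r}$, $\mathsf b(z)=\sum_{r=1}^{n-1}\frac{1}{z-z_r}\big(\frac{\delta_r}{k_r}-k_r\partial_{k_r}^2\big)$,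 $\mathsf a'(z)=\sum_{r}\frac{k_r}{(z-z_r)^2}\partial_{k_r}$, and $\widetilde{\mathsf T}(z)=-\mathsf a(z)^2+\mathsf a'(z)-\mathsf c(z)\mathsf b(z)$. Expanding, $\widetilde{\mathsf T}(z)=\sum_\alpha f_\alpha(z)\mathsf D^{(\alpha)}$ with rational functions $f_\alpha$ of $z$ placed to the left of $z$-independent differential operators $\mathsf D^{(\alpha)}$ in $\bm k$ (e.g. $\mathsf a(z)^2=\sum_{r,s}\frac{1}{(z-z_r)(z-z_s)}k_r\partial_{k_r}k_s\partial_{k_s}$); "$\widetilde{\mathsf T}(y_k)$" means substituting $z=y_k$ in the $f_\alpha$ and pulling back via the change of variables. (In the paper, $\widetilde{\mathsf T}(z)$ represents the conjugate of the operator $\mathsf T(z)=\sum_{r=1}^{n-1}\big(\frac{\delta_r}{(z-z_r)^2}+\frac{\mathsf H_r}{z-z_r}\big)$, built from the Gaudin Hamiltonians $\mathsf H_r$, by the twisted Fourier transform.) *)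

theory Defs
  imports "HOL-Analysis.Analysis"
begin

text \<open>Indices r = 1..n-1 are the elements of a finite type 'm (CARD('m) = n-1);
  indices k = 1..d of the finite type 'd (CARD('d) = d = n-3).\<close>

definition pd :: "'m::finite \<Rightarrow> (complex^'m \<Rightarrow> complex) \<Rightarrow> complex^'m \<Rightarrow> complex" where
  "pd r F x = deriv (\<lambda>t. F (\<chi> i. if i = r then t else x $ i)) (x $ r)"

definition cdiff_on :: "(complex^'m::finite) set \<Rightarrow> (complex^'m \<Rightarrow> complex) \<Rightarrow> bool" where
  "cdiff_on U F \<longleftrightarrow> (\<forall>x\<in>U. \<exists>P. (F has_derivative (\<lambda>h. \<Sum>r\<in>UNIV. P r * h $ r)) (at x))"

definition holo2 :: "(complex^'m::finite) set \<Rightarrow> (complex^'m \<Rightarrow> complex) \<Rightarrow> bool" where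
  "holo2 U F \<longleftrightarrow> cdiff_on U F \<and> (\<forall>r. cdiff_on U (pd r F))"

definition kappa :: "complex^'m::finite \<Rightarrow> 'm \<Rightarrow> complex^'d::finite \<Rightarrow> complex" where
  "kappa z r y = (\<Prod>k\<in>UNIV. z $ r - y $ k) / (\<Prod>s\<in>UNIV - {r}. z $ r - z $ s)"

definition kmap :: "complex^'m::finite \<Rightarrow> complex^'d::finite \<Rightarrow> complex \<Rightarrow> complex^'m" where
  "kmap z y \<rho> = (\<chi> r. \<rho> * kappa z r y)"

text \<open>Normal form of Ttilde(w) = -a(w)^2 + a'(w) - c(w) b(w), applied to F at the point x:
  coefficients (rational in w) on the left of w-independent differential operators.\<close>
definition Ttilde :: "complex^'m::finite \<Rightarrow> ('m \<Rightarrow> complex) \<Rightarrow> (complex^'m \<Rightarrow> complex)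
    \<Rightarrow> complex \<Rightarrow> complex^'m \<Rightarrow> complex" where
  "Ttilde z \<delta> F w x =
     - (\<Sum>r\<in>UNIV. \<Sum>s\<in>UNIV. (1 / ((w - z $ r) * (w - z $ s))) *
           (x $ r * pd r (\<lambda>x'. x' $ s * pd s F x') x))
     + (\<Sum>r\<in>UNIV. (1 / (w - z $ r)^2) * (x $ r * pd r F x))
     - (\<Sum>r\<in>UNIV. \<Sum>s\<in>UNIV. (1 / ((w - z $ r) * (w - z $ s))) *
           (x $ r * (\<delta> s / x $ s * F x - x $ s * pd s (pd s F) x)))"

end

theory Submission imports Defs "HOL-Computational_Algebra.Polynomial" begin
lemma lagrange_sum0:
  fixes z :: "'m::finite \<Rightarrow> complex" and p :: "complex poly"
  assumes inj: "inj z" and deg: "degree p + 2 \<le> CARD('m)"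
  shows "(\<Sum>r\<in>UNIV. poly p (z r) / (\<Prod>s\<in>UNIV - {r}. z r - z s)) = 0"
proof -
  define D where "D r = (\<Prod>s\<in>UNIV - {r}. z r - z s)" for r
  define Q where "Q r = (\<Prod>s\<in>UNIV - {r}. [:- z s, 1:])" for r
  define L where "L = (\<Sum>r\<in>UNIV. smult (poly p (z r) / D r) (Q r))"
  have Dnz: "D r \<noteq> 0" for r
    unfolding D_def using inj by (auto simp: inj_def)
  have degQ: "degree (Q r) = CARD('m) - 1" for r
    unfolding Q_def by (subst degree_prod_eq_sum_degree) (auto simp: card_Diff_singleton)
  have lcQ: "lead_coeff (Q r) = 1" for r
    unfolding Q_def by (simp add: lead_coeff_prod)
  have polyQ: "poly (Q r) (z q) = (if q = r then D r else 0)" for r q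
  proof (cases "q = r")
    case True thus ?thesis by (simp add: Q_def D_def poly_prod)
  next
    case False
    hence "q \<in> UNIV - {r}" by auto
    thus ?thesis using False unfolding Q_def poly_prod
      by (auto intro!: prod_zero)
  qed
  have "poly L (z q) = poly p (z q)" for q
    unfolding L_def poly_sum using Dnz by (simp add: polyQ if_distrib cong: if_cong)
  moreover have "degree L \<le> CARD('m) - 1"
    unfolding L_def by (intro degree_sum_le) (auto intro: order.trans[OF degree_smult_le] simp: degQ)
  ultimately have Lp: "L = p"
    using deg by (intro poly_eqI_degree[where A = "range z"]) (auto simp: card_image inj)
  have "coeff L (CARD('m) - 1) = (\<Sum>r\<in>UNIV. poly p (z r) / D r)"
    unfolding L_def coeff_sum using lcQ degQ by simp
  moreover have "coeff p (CARD('m) - 1) = 0"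
    using deg by (intro coeff_eq_0) auto
  ultimately show ?thesis using Lp by (simp add: D_def)
qed


lemma lin_path_deriv:
  "((\<lambda>t::complex. (\<chi> i. a i + t * b i) :: complex^'m::finite) has_derivative (\<lambda>h. \<chi> i. h * b i)) (at t)"
proof -
  have bl: "bounded_linear (\<lambda>h::complex. (\<chi> i. h * b i) :: complex^'m)"
    by (rule linear_conv_bounded_linear[THEN iffD1]) (auto intro!: linearI simp: vec_eq_iff algebra_simps)
  have "((\<lambda>t::complex. ((\<chi> i. t * b i) :: complex^'m) + (\<chi> i. a i)) has_derivative (\<lambda>h. \<chi> i. h * b i)) (at t)"
    using bl by (intro has_derivative_add_const bounded_linear_imp_has_derivative)
  moreover have "(\<lambda>t::complex. ((\<chi> i. t * b i) :: complex^'m) + (\<chi> i. a i)) = (\<lambda>t. \<chi> i. a i + t * b i)"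
    by (auto simp: vec_eq_iff)
  ultimately show ?thesis by simp
qed

lemma comp_line:
  fixes G :: "complex^'m::finite \<Rightarrow> complex"
  assumes "(G has_derivative (\<lambda>h. \<Sum>r\<in>UNIV. P r * h$r)) (at (\<chi> i. a i + t * b i))"
  shows "((\<lambda>t. G (\<chi> i. a i + t * b i)) has_field_derivative (\<Sum>r\<in>UNIV. P r * b r)) (at t)"
proof -
  have "((\<lambda>t. G (\<chi> i. a i + t * b i)) has_derivative (\<lambda>h. \<Sum>r\<in>UNIV. P r * (\<chi> i. h * b i)$r)) (at t)"
    using has_derivative_compose[OF lin_path_deriv assms] by simp
  moreover have "(\<lambda>h. \<Sum>r\<in>UNIV. P r * (\<chi> i. h * b i)$r) = (*) (\<Sum>r\<in>UNIV. P r * b r)"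
    by (auto intro!: ext simp: sum_distrib_left algebra_simps)
  ultimately show ?thesis unfolding has_field_derivative_def by simp
qed

lemma pd_eqI:
  fixes G :: "complex^'m::finite \<Rightarrow> complex"
  assumes "(G has_derivative (\<lambda>h. \<Sum>r\<in>UNIV. P r * h$r)) (at x)"
  shows "pd r G x = P r"
proof -
  define a where "a i = (if i = r then 0 else x $ i)" for i
  define b where "b i = (if i = r then 1 else (0::complex))" for i
  have e1: "(\<chi> i. a i + (x$r) * b i) = x" by (auto simp: vec_eq_iff a_def b_def)
  have e2: "(\<lambda>t. G (\<chi> i. if i = r then t else x $ i)) = (\<lambda>t. G (\<chi> i. a i + t * b i))"
    by (auto simp: a_def b_def intro!: ext arg_cong[where f=G])
  have "((\<lambda>t. G (\<chi> i. a i + t * b i)) has_field_derivative (\<Sum>s\<in>UNIV. P s * b s)) (at (x$r))"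
    by (rule comp_line) (use assms e1 in simp)
  moreover have "(\<Sum>s\<in>UNIV. P s * b s) = P r" by (simp add: b_def if_distrib[where f="\<lambda>x. P _ * x"] cong: if_cong)
  ultimately show ?thesis unfolding pd_def e2 by (simp add: DERIV_imp_deriv)
qed

lemma cdiff_deriv:
  assumes "cdiff_on U G" "x \<in> U"
  shows "(G has_derivative (\<lambda>h. \<Sum>r\<in>UNIV. pd r G x * h$r)) (at x)"
proof -
  obtain P where P: "(G has_derivative (\<lambda>h. \<Sum>r\<in>UNIV. P r * h$r)) (at x)"
    using assms unfolding cdiff_on_def by blast
  have "pd r G x = P r" for r using pd_eqI[OF P] .
  thus ?thesis using P by simp
qed

lemma pd_prod:
  fixes F :: "complex^'m::finite \<Rightarrow> complex"
  assumes "cdiff_on U F" "cdiff_on U (pd s F)" "x \<in> U"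
  shows "pd r (\<lambda>x'. x' $ s * pd s F x') x = (if r = s then pd s F x else 0) + x $ s * pd r (pd s F) x"
proof -
  have d1: "((\<lambda>x'. x' $ s) has_derivative (\<lambda>h. h $ s)) (at x)"
    by (rule bounded_linear_imp_has_derivative) (rule bounded_linear_vec_nth)
  have "((\<lambda>x'. x' $ s * pd s F x') has_derivative (\<lambda>h. x $ s * (\<Sum>r\<in>UNIV. pd r (pd s F) x * h$r) + h $ s * pd s F x)) (at x)"
    by (rule has_derivative_mult[OF d1 cdiff_deriv[OF assms(2,3)]])
  moreover have "(\<lambda>h. x $ s * (\<Sum>r\<in>UNIV. pd r (pd s F) x * h$r) + h $ s * pd s F x)
     = (\<lambda>h. \<Sum>r\<in>UNIV. ((if r = s then pd s F x else 0) + x $ s * pd r (pd s F) x) * h$r)"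
  proof (intro ext)
    fix h :: "complex^'m"
    have "(\<Sum>r\<in>UNIV. ((if r = s then pd s F x else 0) + x $ s * pd r (pd s F) x) * h$r)
      = (\<Sum>r\<in>UNIV. (if r = s then pd s F x * h$r else 0)) + (\<Sum>r\<in>UNIV. x $ s * pd r (pd s F) x * h$r)"
    proof (subst sum.distrib[symmetric], rule sum.cong[OF refl])
      fix r
      show "((if r = s then pd s F x else 0) + x $ s * pd r (pd s F) x) * h$r
        = (if r = s then pd s F x * h$r else 0) + x $ s * pd r (pd s F) x * h$r"
        by (cases "r = s") (simp_all add: distrib_right)
    qed
    also have "\<dots> = x $ s * (\<Sum>r\<in>UNIV. pd r (pd s F) x * h$r) + h $ s * pd s F x"
      by (simp add: sum_distrib_left mult_ac)
    finally show "x $ s * (\<Sum>r\<in>UNIV. pd r (pd s F) x * h$r) + h $ s * pd s F x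
     = (\<Sum>r\<in>UNIV. ((if r = s then pd s F x else 0) + x $ s * pd r (pd s F) x) * h$r)" by simp
  qed
  ultimately have D: "((\<lambda>x'. x' $ s * pd s F x') has_derivative
      (\<lambda>h. \<Sum>r\<in>UNIV. ((if r = s then pd s F x else 0) + x $ s * pd r (pd s F) x) * h$r)) (at x)"
    by (simp only:)
  show ?thesis by (rule pd_eqI[OF D])
qed

lemma aux1:
  fixes u v :: complex
  assumes "u \<noteq> 0" "v \<noteq> 0"
  shows "1 / (u * v) * (p * u * (X + q * v * Y)) = 1 / (u * v) * (p * u * X) + p * q * Y"
  using assms by (simp add: field_simps)

lemma aux2:
  fixes u v :: complex
  assumes "u \<noteq> 0" "v \<noteq> 0"
  shows "1 / (u * v) * (p * u * E) = p * (E / v)"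
  using assms by (simp add: field_simps)

theorem mainTheorem5:
  fixes z j :: "complex^'m::finite" and y :: "complex^'d::finite" and \<rho> :: complex
    and F :: "complex^'m \<Rightarrow> complex" and U :: "(complex^'m) set" and k :: 'd
  assumes "CARD('m) = CARD('d) + 2"
    and "inj (\<lambda>r. z $ r)"
    and "open U" and "holo2 U F" and "kmap z y \<rho> \<in> U"
    and "\<rho> \<noteq> 0" and "\<forall>r. y $ k \<noteq> z $ r"
  shows "Ttilde z (\<lambda>r. j $ r * (j $ r + 1)) F (y $ k) (kmap z y \<rho>)
       = - deriv (deriv (\<lambda>t. F (kmap z (\<chi> i. if i = k then t else y $ i) \<rho>))) (y $ k)"
proof -
  note card = assms(1) and inj = assms(2) and opn = assms(3) and hol = assms(4)
    and x0U = assms(5) and yz = assms(7)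
  define w where "w = y $ k"
  define x0 where "x0 = kmap z y \<rho>"
  define c where "c r = \<rho> * (\<Prod>k'\<in>UNIV-{k}. z$r - y$k') / (\<Prod>s\<in>UNIV-{r}. z$r - z$s)" for r
  define a where "a r = c r * z$r" for r
  define b where "b r = - c r" for r
  define pth where "pth t = (\<chi> r. a r + t * b r)" for t
  have wz: "w - z$r \<noteq> 0" for r using yz by (simp add: w_def)
  have pth_eq: "kmap z (\<chi> i. if i = k then t else y $ i) \<rho> = pth t" for t
  proof -
    have pr: "(\<Prod>i\<in>UNIV. z $ r - (if i = k then t else y $ i))
        = (z$r - t) * (\<Prod>k'\<in>UNIV-{k}. z$r - y$k')" for r
      by (subst prod.remove[of UNIV k]) (auto intro!: prod.cong)
    have "\<rho> * ((\<Prod>i\<in>UNIV. z $ r - (\<chi> i. if i = k then t else y $ i) $ i) / (\<Prod>s\<in>UNIV-{r}. z$r - z$s))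
        = a r + t * b r" for r
      by (simp only: vec_lambda_beta pr) (simp add: a_def b_def c_def divide_inverse algebra_simps)
    thus ?thesis
      by (simp add: vec_eq_iff kmap_def kappa_def pth_def)
  qed
  have x0_eq: "x0 = pth w"
  proof -
    have "y = (\<chi> i. if i = k then w else y $ i)" by (auto simp: vec_eq_iff w_def)
    thus ?thesis unfolding x0_def using pth_eq by metis
  qed
  have xb: "x0 $ r = b r * (w - z$r)" for r
    by (simp add: x0_eq pth_def a_def b_def algebra_simps)
  have sumb: "(\<Sum>r\<in>UNIV. b r) = 0"
  proof -
    define p where "p = (\<Prod>k'\<in>UNIV-{k}. [:- (y$k'), 1:])"
    have "degree p \<le> card (UNIV - {k} :: 'd set)"
      unfolding p_def by (rule order.trans[OF degree_prod_sum_le]) auto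
    hence "degree p + 2 \<le> CARD('m)" using card by (simp add: card_Diff_singleton)
    from lagrange_sum0[OF inj this]
    have "(\<Sum>r\<in>UNIV. poly p (z$r) / (\<Prod>s\<in>UNIV - {r}. z$r - z$s)) = 0" .
    moreover have pp: "poly p (z$r) = (\<Prod>k'\<in>UNIV-{k}. z$r - y$k')" for r
      by (simp add: p_def poly_prod)
    moreover have "(\<Sum>r\<in>UNIV. c r) = \<rho> * (\<Sum>r\<in>UNIV. poly p (z$r) / (\<Prod>s\<in>UNIV - {r}. z$r - z$s))"
      unfolding sum_distrib_left pp c_def by (simp only: times_divide_eq_right)
    ultimately have "(\<Sum>r\<in>UNIV. c r) = 0" by simp
    thus ?thesis by (simp add: b_def sum_negf)
  qed
  have cd1: "cdiff_on U F" and cd2: "cdiff_on U (pd r F)" for r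
    using hol by (auto simp: holo2_def)
  have ev: "eventually (\<lambda>t. pth t \<in> U) (nhds w)"
  proof -
    have "open (pth -` U)"
      by (rule continuous_open_vimage[OF opn]) (unfold pth_def, rule has_derivative_continuous[OF lin_path_deriv])
    moreover have "w \<in> pth -` U" using x0U x0_eq x0_def by simp
    ultimately show ?thesis using eventually_nhds_in_open by fastforce
  qed
  have "eventually (\<lambda>t. deriv (\<lambda>t. F (kmap z (\<chi> i. if i = k then t else y $ i) \<rho>)) t
          = (\<Sum>r\<in>UNIV. pd r F (pth t) * b r)) (nhds w)"
    using ev
  proof eventually_elim
    case (elim t)
    have "((\<lambda>t. F (pth t)) has_field_derivative (\<Sum>r\<in>UNIV. pd r F (pth t) * b r)) (at t)"
      unfolding pth_def by (rule comp_line) (use cdiff_deriv[OF cd1 elim] in \<open>simp add: pth_def\<close>)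
    thus ?case unfolding pth_eq by (rule DERIV_imp_deriv)
  qed
  hence "deriv (deriv (\<lambda>t. F (kmap z (\<chi> i. if i = k then t else y $ i) \<rho>))) w
       = deriv (\<lambda>t. \<Sum>r\<in>UNIV. pd r F (pth t) * b r) w"
    by (rule deriv_cong_ev) simp
  also have "\<dots> = (\<Sum>r\<in>UNIV. (\<Sum>s\<in>UNIV. pd s (pd r F) x0 * b s) * b r)"
  proof (rule DERIV_imp_deriv, rule DERIV_sum, rule DERIV_cmult_right)
    fix r
    show "((\<lambda>t. pd r F (pth t)) has_field_derivative (\<Sum>s\<in>UNIV. pd s (pd r F) x0 * b s)) (at w)"
      unfolding pth_def by (rule comp_line) (use cdiff_deriv[OF cd2 x0U[folded x0_def]] x0_eq in \<open>simp add: pth_def\<close>)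
  qed
  finally have R: "deriv (deriv (\<lambda>t. F (kmap z (\<chi> i. if i = k then t else y $ i) \<rho>))) w
     = (\<Sum>r\<in>UNIV. \<Sum>s\<in>UNIV. b r * b s * pd r (pd s F) x0)"
    by (subst sum.swap) (simp add: sum_distrib_left sum_distrib_right mult_ac)
  define B where "B r = (1 / (w - z $ r)^2) * (x0 $ r * pd r F x0)" for r
  define E where "E s = (j $ s * (j $ s + 1)) / x0 $ s * F x0 - x0 $ s * pd s (pd s F) x0" for s
  have A: "(1 / ((w - z $ r) * (w - z $ s))) * (x0 $ r * pd r (\<lambda>x'. x' $ s * pd s F x') x0)
      = (if r = s then B r else 0) + b r * b s * pd r (pd s F) x0" for r s
  proof -
    have P: "pd r (\<lambda>x'. x' $ s * pd s F x') x0 = (if r = s then pd s F x0 else 0) + x0 $ s * pd r (pd s F) x0"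
      by (rule pd_prod[OF cd1 cd2 x0U[folded x0_def]])
    show ?thesis unfolding P B_def xb
      using aux1[OF wz[of r] wz[of s], of "b r" "if r = s then pd s F x0 else 0" "b s" "pd r (pd s F) x0"]
      by (cases "r = s") (simp_all add: power2_eq_square)
  qed
  have C: "(1 / ((w - z $ r) * (w - z $ s))) * (x0 $ r * E s) = b r * (E s / (w - z $ s))" for r s
    unfolding xb by (rule aux2[OF wz[of r] wz[of s]])
  have C0: "(\<Sum>r\<in>UNIV. \<Sum>s\<in>UNIV. b r * (E s / (w - z $ s))) = 0"
    by (simp only: sum_distrib_left[symmetric] sum_distrib_right[symmetric] sumb mult_zero_left)
  have "Ttilde z (\<lambda>r. j $ r * (j $ r + 1)) F w x0
      = - (\<Sum>r\<in>UNIV. \<Sum>s\<in>UNIV. (if r = s then B r else 0) + b r * b s * pd r (pd s F) x0)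
        + (\<Sum>r\<in>UNIV. B r) - (\<Sum>r\<in>UNIV. \<Sum>s\<in>UNIV. b r * (E s / (w - z $ s)))"
    unfolding Ttilde_def A C[unfolded E_def] B_def E_def ..
  also have "\<dots> = - (\<Sum>r\<in>UNIV. \<Sum>s\<in>UNIV. b r * b s * pd r (pd s F) x0)"
  proof -
    have S1: "(\<Sum>r\<in>UNIV. \<Sum>s\<in>UNIV. (if r = s then B r else 0) + b r * b s * pd r (pd s F) x0)
      = (\<Sum>r\<in>UNIV. B r) + (\<Sum>r\<in>UNIV. \<Sum>s\<in>UNIV. b r * b s * pd r (pd s F) x0)"
      by (simp only: sum.distrib) simp
    show ?thesis by (simp only: S1 C0) simp
  qed
  finally have fin: "Ttilde z (\<lambda>r. j $ r * (j $ r + 1)) F w x0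
     = - deriv (deriv (\<lambda>t. F (kmap z (\<chi> i. if i = k then t else y $ i) \<rho>))) w"
    by (simp only: R)
  show ?thesis using fin unfolding w_def x0_def .
qed
end
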